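(* Assume (A1)–(A3) below. Then for each instrument $\ell\in\{1,\dots,L\}$, $$\mathrm{Wald}_\ell=\sum_{t\in\mathcal T}\mathrm{LATE}_t\,\alpha_t(\ell),\qquad \sum_{t\in\mathcal T}\alpha_t(\ell)=1,$$ where $\alpha_t(\ell)=\theta_t\,\varphi_t(\ell)/\pi_\ell$ and $$\varphi_t(\ell)=\sum_{z_{-\ell}\in\{0,1\}^{L-1}}\bigl[t(1,z_{-\ell})\,q_\ell(z_{-\ell})-t(0,z_{-\ell})\,q^0_\ell(z_{-\ell})\bigr].$$
   Context: We observe i.i.d. draws of $(Y_i,D_i,Z_{1i},\dots,Z_{Li})$ with $Y_i\in\mathbb R$, $D_i\in\{0,1\}$ and $L\ge2$ binary instruments $Z_{\ell i}\in\{0,1\}$; $\mathbf Z_i=(Z_{1i},\dots,Z_{Li})'$. Each unit has potential outcomes $Y_i(0),Y_i(1)$ and a potential treatment function (its "compliance type") $D_i(\cdot):\{0,1\}^L\to\{0,1\}$; observed $D_i=D_i(\mathbf Z_i)$ and $Y_i=D_iY_i(1)+(1-D_i)Y_i(0)$. $\mathcal T$ is the set of compliance types, $\theta_t=P(D_i(\cdot)=t)$, $\mathrm{LATE}_t=\mathbb E[Y_i(1)-Y_i(0)\mid D_i(\cdot)=t]$. For a type $t$, $t(z_\ell,z_{-\ell})$ denotes its treatment decision at instrument value with $\ell$-th coordinate $z_\ell$ and remaining coordinates $z_{-\ell}$. Let $p_\ell=P(Z_{\ell i}=1)$, $\pi_\ell=\mathbb E[D_i\mid Z_{\ell i}=1]-\mathbb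 E[D_i\mid Z_{\ell i}=0]$, $\rho_\ell=\mathbb E[Y_i\mid Z_{\ell i}=1]-\mathbb E[Y_i\mid Z_{\ell i}=0]$, $\mathrm{Wald}_\ell=\rho_\ell/\pi_\ell$, $\Sigma_Z=\mathrm{Var}(\mathbf Z_i)$. With $Z_{-\ell}$ the vector of the other $L-1$ instruments, $q_\ell(z_{-\ell})=P(Z_{-\ell}=z_{-\ell}\mid Z_\ell=1)$ and $q^0_\ell(z_{-\ell})=P(Z_{-\ell}=z_{-\ell}\mid Z_\ell=0)$. Assumptions: (A1) $(Y_i(0),Y_i(1),D_i(\cdot))$ is independent of $\mathbf Z_i$. (A2) For every $i$, $D_i(z)$ is nondecreasing in each coordinate $z_k$, $k=1,\dots,L$. (A3) $p_\ell>0$ and $\pi_\ell>0$ for each $\ell$, and $\Sigma_Z$ is positive definite. *)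

theory Defs
  imports "HOL-Probability.Probability"
begin

text \<open>Instruments are indexed by 0..<L. An instrument value z in {0,1}^L is encoded as
  the set of indices l with z_l = 1, i.e. a subset of {..<L}. A compliance type is a
  function from {0,1}^L (= Pow {..<L}) to {0,1} (= bool), extensional outside its domain.\<close>

definition ctypes :: "nat \<Rightarrow> (nat set \<Rightarrow> bool) set" where
  "ctypes L = (Pow {..<L} \<rightarrow>\<^sub>E (UNIV :: bool set))"

definition cexp :: "'a measure \<Rightarrow> ('a \<Rightarrow> real) \<Rightarrow> ('a \<Rightarrow> bool) \<Rightarrow> real" where
  "cexp M X P = (\<integral>\<omega>. indicator {\<omega>\<in>space M. P \<omega>} \<omega> * X \<omega> \<partial>M)
                 / measure M {\<omega>\<in>space M. P \<omega>}"

definition cprob :: "'a measure \<Rightarrow> ('a \<Rightarrow> bool) \<Rightarrow> ('a \<Rightarrow> bool) \<Rightarrow> real" where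
  "cprob M A P = measure M {\<omega>\<in>space M. A \<omega> \<and> P \<omega>} / measure M {\<omega>\<in>space M. P \<omega>}"

definition Dobs :: "('a \<Rightarrow> nat set \<Rightarrow> bool) \<Rightarrow> ('a \<Rightarrow> nat set) \<Rightarrow> 'a \<Rightarrow> real" where
  "Dobs D Z \<omega> = of_bool (D \<omega> (Z \<omega>))"

definition Yobs :: "('a \<Rightarrow> nat set \<Rightarrow> bool) \<Rightarrow> ('a \<Rightarrow> nat set) \<Rightarrow> ('a \<Rightarrow> real) \<Rightarrow> ('a \<Rightarrow> real) \<Rightarrow> 'a \<Rightarrow> real" where
  "Yobs D Z Y0 Y1 \<omega> = (if D \<omega> (Z \<omega>) then Y1 \<omega> else Y0 \<omega>)"

definition pZ :: "'a measure \<Rightarrow> ('a \<Rightarrow> nat set) \<Rightarrow> nat \<Rightarrow> real" where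
  "pZ M Z l = measure M {\<omega>\<in>space M. l \<in> Z \<omega>}"

definition piZ :: "'a measure \<Rightarrow> ('a \<Rightarrow> nat set \<Rightarrow> bool) \<Rightarrow> ('a \<Rightarrow> nat set) \<Rightarrow> nat \<Rightarrow> real" where
  "piZ M D Z l = cexp M (Dobs D Z) (\<lambda>\<omega>. l \<in> Z \<omega>) - cexp M (Dobs D Z) (\<lambda>\<omega>. l \<notin> Z \<omega>)"

definition rhoZ :: "'a measure \<Rightarrow> ('a \<Rightarrow> nat set \<Rightarrow> bool) \<Rightarrow> ('a \<Rightarrow> nat set)
    \<Rightarrow> ('a \<Rightarrow> real) \<Rightarrow> ('a \<Rightarrow> real) \<Rightarrow> nat \<Rightarrow> real" where
  "rhoZ M D Z Y0 Y1 l = cexp M (Yobs D Z Y0 Y1) (\<lambda>\<omega>. l \<in> Z \<omega>)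
                       - cexp M (Yobs D Z Y0 Y1) (\<lambda>\<omega>. l \<notin> Z \<omega>)"

definition wald :: "'a measure \<Rightarrow> ('a \<Rightarrow> nat set \<Rightarrow> bool) \<Rightarrow> ('a \<Rightarrow> nat set)
    \<Rightarrow> ('a \<Rightarrow> real) \<Rightarrow> ('a \<Rightarrow> real) \<Rightarrow> nat \<Rightarrow> real" where
  "wald M D Z Y0 Y1 l = rhoZ M D Z Y0 Y1 l / piZ M D Z l"

definition theta :: "'a measure \<Rightarrow> ('a \<Rightarrow> nat set \<Rightarrow> bool) \<Rightarrow> (nat set \<Rightarrow> bool) \<Rightarrow> real" where
  "theta M D t = measure M {\<omega>\<in>space M. D \<omega> = t}"

definition LATE :: "'a measure \<Rightarrow> ('a \<Rightarrow> nat set \<Rightarrow> bool) \<Rightarrow> ('a \<Rightarrow> real) \<Rightarrow> ('a \<Rightarrow> real)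
    \<Rightarrow> (nat set \<Rightarrow> bool) \<Rightarrow> real" where
  "LATE M D Y0 Y1 t = cexp M (\<lambda>\<omega>. Y1 \<omega> - Y0 \<omega>) (\<lambda>\<omega>. D \<omega> = t)"

definition q1 :: "'a measure \<Rightarrow> ('a \<Rightarrow> nat set) \<Rightarrow> nat \<Rightarrow> nat set \<Rightarrow> real" where
  "q1 M Z l w = cprob M (\<lambda>\<omega>. Z \<omega> - {l} = w) (\<lambda>\<omega>. l \<in> Z \<omega>)"

definition q0 :: "'a measure \<Rightarrow> ('a \<Rightarrow> nat set) \<Rightarrow> nat \<Rightarrow> nat set \<Rightarrow> real" where
  "q0 M Z l w = cprob M (\<lambda>\<omega>. Z \<omega> - {l} = w) (\<lambda>\<omega>. l \<notin> Z \<omega>)"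

text \<open>t(1,w) = t (insert l w), t(0,w) = t w.\<close>
definition phi :: "nat \<Rightarrow> 'a measure \<Rightarrow> ('a \<Rightarrow> nat set) \<Rightarrow> (nat set \<Rightarrow> bool) \<Rightarrow> nat \<Rightarrow> real" where
  "phi L M Z t l = (\<Sum>w\<in>Pow ({..<L} - {l}).
      of_bool (t (insert l w)) * q1 M Z l w - of_bool (t w) * q0 M Z l w)"

definition alpha :: "nat \<Rightarrow> 'a measure \<Rightarrow> ('a \<Rightarrow> nat set \<Rightarrow> bool) \<Rightarrow> ('a \<Rightarrow> nat set)
    \<Rightarrow> (nat set \<Rightarrow> bool) \<Rightarrow> nat \<Rightarrow> real" where
  "alpha L M D Z t l = theta M D t * phi L M Z t l / piZ M D Z l"

definition covZ :: "'a measure \<Rightarrow> ('a \<Rightarrow> nat set) \<Rightarrow> nat \<Rightarrow> nat \<Rightarrow> real" where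
  "covZ M Z j k = (\<integral>\<omega>. of_bool (j \<in> Z \<omega>) * of_bool (k \<in> Z \<omega>) \<partial>M)
      - (\<integral>\<omega>. of_bool (j \<in> Z \<omega>) \<partial>M) * (\<integral>\<omega>. of_bool (k \<in> Z \<omega>) \<partial>M)"

definition covZ_posdef :: "nat \<Rightarrow> 'a measure \<Rightarrow> ('a \<Rightarrow> nat set) \<Rightarrow> bool" where
  "covZ_posdef L M Z \<longleftrightarrow> (\<forall>c :: nat \<Rightarrow> real. (\<exists>j<L. c j \<noteq> 0) \<longrightarrow>
      (\<Sum>j<L. \<Sum>k<L. c j * covZ M Z j k * c k) > 0)"

text \<open>Independence of two random elements with possibly different value types
  (the library's indep_var requires a common type): the standard definition
  P(X \<in> A, W \<in> B) = P(X \<in> A) P(W \<in> B) for all measurable A, B.\<close>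
definition indep_rv :: "'a measure \<Rightarrow> 'b measure \<Rightarrow> ('a \<Rightarrow> 'b) \<Rightarrow> 'c measure \<Rightarrow> ('a \<Rightarrow> 'c) \<Rightarrow> bool" where
  "indep_rv M Ma X Mb W \<longleftrightarrow> X \<in> M \<rightarrow>\<^sub>M Ma \<and> W \<in> M \<rightarrow>\<^sub>M Mb \<and>
     (\<forall>A\<in>sets Ma. \<forall>B\<in>sets Mb.
        measure M {\<omega>\<in>space M. X \<omega> \<in> A \<and> W \<omega> \<in> B}
        = measure M {\<omega>\<in>space M. X \<omega> \<in> A} * measure M {\<omega>\<in>space M. W \<omega> \<in> B})"

end

theory Submission
  imports Defs
begin

lemma indep_rv_integral:
  fixes g :: "'b \<Rightarrow> real"
  assumes P: "prob_space M" and ind: "indep_rv M Ma X Mb W" and B: "B \<in> sets Mb"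
    and g: "g \<in> borel_measurable Ma" and int: "integrable M (\<lambda>\<omega>. g (X \<omega>))"
  shows "(\<integral>\<omega>. indicator {\<omega>\<in>space M. W \<omega> \<in> B} \<omega> * g (X \<omega>) \<partial>M)
       = measure M {\<omega>\<in>space M. W \<omega> \<in> B} * (\<integral>\<omega>. g (X \<omega>) \<partial>M)"
proof -
  interpret prob_space M by fact
  let ?E = "{\<omega>\<in>space M. W \<omega> \<in> B}"
  let ?c = "measure M ?E"
  have X[measurable]: "X \<in> M \<rightarrow>\<^sub>M Ma" and W: "W \<in> M \<rightarrow>\<^sub>M Mb" using ind by (auto simp: indep_rv_def)
  have E[measurable]: "?E \<in> sets M"
  proof -
    have "?E = W -` B \<inter> space M" by auto
    then show ?thesis using measurable_sets[OF W B] by simp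
  qed
  define N where "N = density M (\<lambda>\<omega>. ennreal (indicator ?E \<omega>))"
  have XN: "X \<in> N \<rightarrow>\<^sub>M Ma" unfolding N_def by (simp add: measurable_cong_sets[OF sets_density refl] X)
  have eq: "distr N Ma X = density (distr M Ma X) (\<lambda>_. ennreal ?c)"
  proof (rule measure_eqI)
    show "sets (distr N Ma X) = sets (density (distr M Ma X) (\<lambda>_. ennreal ?c))" by simp
    fix A assume "A \<in> sets (distr N Ma X)"
    then have A: "A \<in> sets Ma" by simp
    have XA[measurable]: "X -` A \<inter> space M \<in> sets M" using measurable_sets[OF X A] .
    have "emeasure (distr N Ma X) A = emeasure N (X -` A \<inter> space N)"
      by (rule emeasure_distr[OF XN A])
    also have "\<dots> = (\<integral>\<^sup>+\<omega>. ennreal (indicator ?E \<omega>) * indicator (X -` A \<inter> space M) \<omega> \<partial>M)"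
      unfolding N_def by (subst emeasure_density) auto
    also have "\<dots> = (\<integral>\<^sup>+\<omega>. indicator (?E \<inter> (X -` A \<inter> space M)) \<omega> \<partial>M)"
      by (intro nn_integral_cong) (auto simp: indicator_def)
    also have "\<dots> = emeasure M (?E \<inter> (X -` A \<inter> space M))" by (rule nn_integral_indicator) auto
    also have "?E \<inter> (X -` A \<inter> space M) = {\<omega>\<in>space M. X \<omega> \<in> A \<and> W \<omega> \<in> B}" by auto
    also have "emeasure M {\<omega>\<in>space M. X \<omega> \<in> A \<and> W \<omega> \<in> B} = ennreal (measure M {\<omega>\<in>space M. X \<omega> \<in> A} * ?c)"
      using ind A B unfolding indep_rv_def by (simp add: emeasure_eq_measure)
    also have "\<dots> = ennreal ?c * emeasure M (X -` A \<inter> space M)"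
    proof -
      have "{\<omega>\<in>space M. X \<omega> \<in> A} = X -` A \<inter> space M" by auto
      then show ?thesis by (simp add: emeasure_eq_measure ennreal_mult' mult.commute)
    qed
    also have "\<dots> = ennreal ?c * emeasure (distr M Ma X) A"
      by (simp add: emeasure_distr[OF X A])
    also have "\<dots> = emeasure (density (distr M Ma X) (\<lambda>_. ennreal ?c)) A"
      using A by (simp add: emeasure_density nn_integral_cmult_indicator)
    finally show "emeasure (distr N Ma X) A = emeasure (density (distr M Ma X) (\<lambda>_. ennreal ?c)) A" .
  qed
  have "(\<integral>\<omega>. indicator ?E \<omega> * g (X \<omega>) \<partial>M) = (\<integral>\<omega>. g (X \<omega>) \<partial>N)"
    unfolding N_def using g by (subst integral_density) (auto simp: measurable_compose[OF X g])
  also have "\<dots> = (\<integral>x. g x \<partial>distr N Ma X)" by (rule integral_distr[OF XN g, symmetric])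
  also have "\<dots> = (\<integral>x. g x \<partial>density (distr M Ma X) (\<lambda>_. ennreal ?c))" by (simp add: eq)
  also have "\<dots> = (\<integral>x. ?c * g x \<partial>distr M Ma X)"
    using g by (subst integral_density) auto
  also have "\<dots> = ?c * (\<integral>\<omega>. g (X \<omega>) \<partial>M)"
    using g by (simp add: integral_distr[OF X])
  finally show ?thesis .
qed

lemma sum_sum_delta:
  fixes c :: "'x \<Rightarrow> 'y \<Rightarrow> real"
  assumes "finite A" "finite B" "a \<in> A" "b \<in> B"
  shows "(\<Sum>z\<in>A. \<Sum>t\<in>B. if z = a \<and> t = b then c z t else 0) = c a b"
proof -
  have "(\<Sum>z\<in>A. \<Sum>t\<in>B. if z = a \<and> t = b then c z t else 0)
      = (\<Sum>z\<in>A. if z = a then (\<Sum>t\<in>B. if t = b then c z t else 0) else 0)"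
    by (intro sum.cong) (auto intro: sum.cong)
  also have "\<dots> = c a b" using assms by simp
  finally show ?thesis .
qed

lemma finite_ctypes: "finite (ctypes L)"
  unfolding ctypes_def by (intro finite_PiE) auto

theorem proposition1:
  fixes M :: "'a measure" and L :: nat
    and Z :: "'a \<Rightarrow> nat set"
    and D :: "'a \<Rightarrow> nat set \<Rightarrow> bool"
    and Y0 Y1 :: "'a \<Rightarrow> real"
  assumes "prob_space M"
    and "L \<ge> 2"
    and Z_meas: "Z \<in> M \<rightarrow>\<^sub>M count_space UNIV"
    and Z_range: "\<And>\<omega>. \<omega> \<in> space M \<Longrightarrow> Z \<omega> \<subseteq> {..<L}"
    and D_meas: "D \<in> M \<rightarrow>\<^sub>M count_space UNIV"
    and D_range: "\<And>\<omega>. \<omega> \<in> space M \<Longrightarrow> D \<omega> \<in> ctypes L"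
    and Y0_int: "integrable M Y0"
    and Y1_int: "integrable M Y1"
    and A1: "indep_rv M
               (borel \<Otimes>\<^sub>M (borel \<Otimes>\<^sub>M count_space UNIV)) (\<lambda>\<omega>. (Y0 \<omega>, Y1 \<omega>, D \<omega>))
               (count_space UNIV) Z"
    and A2: "\<And>\<omega> z z'. \<omega> \<in> space M \<Longrightarrow> z \<subseteq> z' \<Longrightarrow> z' \<subseteq> {..<L}
               \<Longrightarrow> D \<omega> z \<Longrightarrow> D \<omega> z'"
    and A3_p: "\<And>l. l < L \<Longrightarrow> pZ M Z l > 0"
    and A3_pi: "\<And>l. l < L \<Longrightarrow> piZ M D Z l > 0"
    and A3_cov: "covZ_posdef L M Z"
    and l: "l < L"
  shows "wald M D Z Y0 Y1 l = (\<Sum>t\<in>ctypes L. LATE M D Y0 Y1 t * alpha L M D Z t l)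
         \<and> (\<Sum>t\<in>ctypes L. alpha L M D Z t l) = 1"
  proof -
  interpret prob_space M by fact
  define PZ where "PZ = Pow {..<L}"
  define T where "T = ctypes L"
  have fPZ: "finite PZ" unfolding PZ_def by simp
  have fT: "finite T" unfolding T_def by (rule finite_ctypes)
  have ZPZ: "\<And>\<omega>. \<omega> \<in> space M \<Longrightarrow> Z \<omega> \<in> PZ" using Z_range unfolding PZ_def by auto
  have DT: "\<And>\<omega>. \<omega> \<in> space M \<Longrightarrow> D \<omega> \<in> T" using D_range unfolding T_def by auto
  have evZ: "{\<omega>\<in>space M. Z \<omega> \<in> A} \<in> events" for A
  proof -
    have "{\<omega>\<in>space M. Z \<omega> \<in> A} = Z -` A \<inter> space M" by auto
    then show ?thesis using measurable_sets[OF Z_meas, of A] by simp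
  qed
  have evD: "{\<omega>\<in>space M. D \<omega> \<in> A} \<in> events" for A
  proof -
    have "{\<omega>\<in>space M. D \<omega> \<in> A} = D -` A \<inter> space M" by auto
    then show ?thesis using measurable_sets[OF D_meas, of A] by simp
  qed
  have evD1: "{\<omega>\<in>space M. D \<omega> = t} \<in> events" for t using evD[of "{t}"] by simp
  have evZ1: "{\<omega>\<in>space M. Z \<omega> = t} \<in> events" for t using evZ[of "{t}"] by simp
  have evQ: "{\<omega>\<in>space M. Q (Z \<omega>)} \<in> events" for Q
    using evZ[of "Collect Q"] by simp
  define E where "E = (\<lambda>z t. {\<omega>\<in>space M. Z \<omega> = z \<and> D \<omega> = t})"
  have evE: "E z t \<in> events" for z t
  proof -
    have "E z t = {\<omega>\<in>space M. Z \<omega> \<in> {z}} \<inter> {\<omega>\<in>space M. D \<omega> \<in> {t}}" unfolding E_def by auto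
    then show ?thesis using evZ[of "{z}"] evD[of "{t}"] by (auto intro: sets.Int)
  qed
  define pz where "pz = (\<lambda>z. prob {\<omega>\<in>space M. Z \<omega> = z})"
  define \<Delta> where "\<Delta> = (\<lambda>t. \<integral>\<omega>. indicator {\<omega>\<in>space M. D \<omega> = t} \<omega> * (Y1 \<omega> - Y0 \<omega>) \<partial>M)"
  define X where "X = (\<lambda>\<omega>. (Y0 \<omega>, Y1 \<omega>, D \<omega>))"
  define Ma :: "(real \<times> real \<times> (nat set \<Rightarrow> bool)) measure"
    where "Ma = borel \<Otimes>\<^sub>M (borel \<Otimes>\<^sub>M count_space UNIV)"
  have ind: "indep_rv M Ma X (count_space UNIV) Z" using A1 unfolding X_def Ma_def .
  have I3: "prob (E z t) = pz z * theta M D t" for z t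
  proof -
    have s: "UNIV \<times> (UNIV \<times> {t}) \<in> sets Ma" unfolding Ma_def
      by (intro pair_measureI) auto
    have "prob {\<omega>\<in>space M. X \<omega> \<in> UNIV \<times> (UNIV \<times> {t}) \<and> Z \<omega> \<in> {z}}
       = prob {\<omega>\<in>space M. X \<omega> \<in> UNIV \<times> (UNIV \<times> {t})} * prob {\<omega>\<in>space M. Z \<omega> \<in> {z}}"
      using ind s unfolding indep_rv_def sets_count_space by blast
    moreover have "{\<omega>\<in>space M. X \<omega> \<in> UNIV \<times> (UNIV \<times> {t}) \<and> Z \<omega> \<in> {z}} = E z t"
      unfolding X_def E_def by auto
    moreover have "{\<omega>\<in>space M. X \<omega> \<in> UNIV \<times> (UNIV \<times> {t})} = {\<omega>\<in>space M. D \<omega> = t}"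
      unfolding X_def by auto
    ultimately show ?thesis unfolding pz_def theta_def by simp
  qed
  have I1: "(\<integral>\<omega>. indicator {\<omega>\<in>space M. Q (Z \<omega>)} \<omega> * Y0 \<omega> \<partial>M)
       = prob {\<omega>\<in>space M. Q (Z \<omega>)} * expectation Y0" for Q
    using indep_rv_integral[OF \<open>prob_space M\<close> ind, of "Collect Q" "\<lambda>x. fst x"] Y0_int
    unfolding X_def Ma_def by simp
  have I2: "(\<integral>\<omega>. indicator (E z t) \<omega> * (Y1 \<omega> - Y0 \<omega>) \<partial>M) = pz z * \<Delta> t" for z t
  proof -
    let ?g = "\<lambda>x::real \<times> real \<times> (nat set \<Rightarrow> bool). indicator {t} (snd (snd x)) * (fst (snd x) - fst x)"
    have gm: "?g \<in> borel_measurable Ma"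
    proof -
      have s: "UNIV \<times> (UNIV \<times> {t}) \<in> sets Ma" unfolding Ma_def
        by (intro pair_measureI) auto
      have "(\<lambda>x. indicator (UNIV \<times> (UNIV \<times> {t})) x :: real) \<in> borel_measurable Ma"
        using s by (rule borel_measurable_indicator)
      moreover have "(\<lambda>x::real \<times> real \<times> (nat set \<Rightarrow> bool). fst (snd x) - fst x) \<in> borel_measurable Ma"
        unfolding Ma_def
        by (intro borel_measurable_diff measurable_fst'' measurable_snd'' measurable_ident_sets) auto
      ultimately have "(\<lambda>x. indicator (UNIV \<times> (UNIV \<times> {t})) x * (fst (snd x) - fst x)) \<in> borel_measurable Ma"
        by (rule borel_measurable_times)
      moreover have "\<And>x::real \<times> real \<times> (nat set \<Rightarrow> bool). indicator (UNIV \<times> (UNIV \<times> {t})) x = (indicator {t} (snd (snd x)) :: real)"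
        by (auto simp: indicator_def)
      ultimately show ?thesis by simp
    qed
    have gi: "integrable M (\<lambda>\<omega>. ?g (X \<omega>))"
    proof -
      have "integrable M (\<lambda>\<omega>. indicator {\<omega>\<in>space M. D \<omega> \<in> {t}} \<omega> *\<^sub>R (Y1 \<omega> - Y0 \<omega>))"
        using evD1 Y0_int Y1_int by (intro integrable_mult_indicator) auto
      moreover have "integrable M (\<lambda>\<omega>. ?g (X \<omega>)) = integrable M (\<lambda>\<omega>. indicator {\<omega>\<in>space M. D \<omega> \<in> {t}} \<omega> *\<^sub>R (Y1 \<omega> - Y0 \<omega>))"
        by (rule Bochner_Integration.integrable_cong) (auto simp: X_def indicator_def)
      ultimately show ?thesis by simp
    qed
    have "(\<integral>\<omega>. indicator {\<omega>\<in>space M. Z \<omega> \<in> {z}} \<omega> * ?g (X \<omega>) \<partial>M)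
        = prob {\<omega>\<in>space M. Z \<omega> \<in> {z}} * (\<integral>\<omega>. ?g (X \<omega>) \<partial>M)"
      by (rule indep_rv_integral[OF \<open>prob_space M\<close> ind _ gm gi]) simp
    moreover have "(\<integral>\<omega>. indicator {\<omega>\<in>space M. Z \<omega> \<in> {z}} \<omega> * ?g (X \<omega>) \<partial>M)
        = (\<integral>\<omega>. indicator (E z t) \<omega> * (Y1 \<omega> - Y0 \<omega>) \<partial>M)"
      by (intro Bochner_Integration.integral_cong) (auto simp: X_def E_def indicator_def)
    moreover have "(\<integral>\<omega>. ?g (X \<omega>) \<partial>M) = \<Delta> t"
      unfolding \<Delta>_def by (intro Bochner_Integration.integral_cong) (auto simp: X_def indicator_def)
    ultimately show ?thesis unfolding pz_def by simp
  qed
  have thetaLATE: "theta M D t * LATE M D Y0 Y1 t = \<Delta> t" for t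
  proof (cases "theta M D t = 0")
    case True
    have N: "{\<omega>\<in>space M. D \<omega> = t} \<in> null_sets M"
      using True evD[of "{t}"] unfolding theta_def by (simp add: null_sets_def emeasure_eq_measure)
    have "AE \<omega> in M. indicator {\<omega>\<in>space M. D \<omega> = t} \<omega> * (Y1 \<omega> - Y0 \<omega>) = 0"
      by (rule AE_I'[OF N]) (auto simp: indicator_def)
    then have "\<Delta> t = 0" unfolding \<Delta>_def by (rule integral_eq_zero_AE)
    then show ?thesis using True by simp
  next
    case False
    then show ?thesis unfolding LATE_def cexp_def theta_def \<Delta>_def by simp
  qed
  have iE: "integrable M (\<lambda>\<omega>. c * indicator (E z t) \<omega> :: real)" for c z t
    using evE[of z t] by (intro integrable_mult_right integrable_real_indicator) (auto simp: less_top[symmetric])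
  have iEY: "integrable M (\<lambda>\<omega>. c * (indicator (E z t) \<omega> * (Y1 \<omega> - Y0 \<omega>)) :: real)" for c z t
  proof -
    have "integrable M (\<lambda>\<omega>. indicator (E z t) \<omega> *\<^sub>R (Y1 \<omega> - Y0 \<omega>))"
      using evE Y0_int Y1_int by (intro integrable_mult_indicator) auto
    then show ?thesis by (intro integrable_mult_right) simp
  qed
  have DobsS: "indicator {\<omega>\<in>space M. Q (Z \<omega>)} \<omega> * Dobs D Z \<omega>
      = (\<Sum>z\<in>PZ. \<Sum>t\<in>T. of_bool (Q z \<and> t z) * indicator (E z t) \<omega>)" if "\<omega> \<in> space M" for \<omega> Q
  proof -
    have "(\<Sum>z\<in>PZ. \<Sum>t\<in>T. of_bool (Q z \<and> t z) * indicator (E z t) \<omega> :: real)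
        = (\<Sum>z\<in>PZ. \<Sum>t\<in>T. if z = Z \<omega> \<and> t = D \<omega> then of_bool (Q z \<and> t z) else 0 :: real)"
      using that by (intro sum.cong refl) (auto simp: E_def indicator_def)
    also have "\<dots> = of_bool (Q (Z \<omega>) \<and> D \<omega> (Z \<omega>))"
      by (rule sum_sum_delta[OF fPZ fT ZPZ[OF that] DT[OF that]])
    finally show ?thesis using that by (simp add: Dobs_def indicator_def)
  qed
  have YobsS: "indicator {\<omega>\<in>space M. Q (Z \<omega>)} \<omega> * Yobs D Z Y0 Y1 \<omega>
      = indicator {\<omega>\<in>space M. Q (Z \<omega>)} \<omega> * Y0 \<omega>
        + (\<Sum>z\<in>PZ. \<Sum>t\<in>T. of_bool (Q z \<and> t z) * (indicator (E z t) \<omega> * (Y1 \<omega> - Y0 \<omega>)))"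
    if "\<omega> \<in> space M" for \<omega> Q
  proof -
    have "(\<Sum>z\<in>PZ. \<Sum>t\<in>T. of_bool (Q z \<and> t z) * (indicator (E z t) \<omega> * (Y1 \<omega> - Y0 \<omega>)))
        = (\<Sum>z\<in>PZ. \<Sum>t\<in>T. if z = Z \<omega> \<and> t = D \<omega> then of_bool (Q z \<and> t z) * (Y1 \<omega> - Y0 \<omega>) else 0)"
      using that by (intro sum.cong refl) (auto simp: E_def indicator_def)
    also have "\<dots> = of_bool (Q (Z \<omega>) \<and> D \<omega> (Z \<omega>)) * (Y1 \<omega> - Y0 \<omega>)"
      by (rule sum_sum_delta[OF fPZ fT ZPZ[OF that] DT[OF that]])
    finally show ?thesis using that by (simp add: Yobs_def indicator_def)
  qed
  have numD: "(\<integral>\<omega>. indicator {\<omega>\<in>space M. Q (Z \<omega>)} \<omega> * Dobs D Z \<omega> \<partial>M)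
      = (\<Sum>t\<in>T. theta M D t * (\<Sum>z\<in>PZ. of_bool (Q z \<and> t z) * pz z))" for Q
  proof -
    have "(\<integral>\<omega>. indicator {\<omega>\<in>space M. Q (Z \<omega>)} \<omega> * Dobs D Z \<omega> \<partial>M)
        = (\<integral>\<omega>. (\<Sum>z\<in>PZ. \<Sum>t\<in>T. (of_bool (Q z \<and> t z)::real) * indicator (E z t) \<omega>) \<partial>M)"
      by (intro Bochner_Integration.integral_cong refl) (simp add: DobsS)
    also have "\<dots> = (\<Sum>z\<in>PZ. \<Sum>t\<in>T. (\<integral>\<omega>. (of_bool (Q z \<and> t z)::real) * indicator (E z t) \<omega> \<partial>M))"
    proof -
      have "(\<integral>\<omega>. (\<Sum>z\<in>PZ. \<Sum>t\<in>T. (of_bool (Q z \<and> t z)::real) * indicator (E z t) \<omega>) \<partial>M)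
         = (\<Sum>z\<in>PZ. (\<integral>\<omega>. (\<Sum>t\<in>T. (of_bool (Q z \<and> t z)::real) * indicator (E z t) \<omega>) \<partial>M))"
        by (rule Bochner_Integration.integral_sum) (intro Bochner_Integration.integrable_sum iE)
      also have "\<dots> = (\<Sum>z\<in>PZ. \<Sum>t\<in>T. (\<integral>\<omega>. (of_bool (Q z \<and> t z)::real) * indicator (E z t) \<omega> \<partial>M))"
        by (intro sum.cong refl Bochner_Integration.integral_sum iE)
      finally show ?thesis .
    qed
    also have "\<dots> = (\<Sum>z\<in>PZ. \<Sum>t\<in>T. of_bool (Q z \<and> t z) * (pz z * theta M D t))"
    proof -
      have "E z t \<inter> space M = E z t" for z t unfolding E_def by auto
      then show ?thesis by (simp add: I3)
    qed
    also have "\<dots> = (\<Sum>t\<in>T. \<Sum>z\<in>PZ. theta M D t * (of_bool (Q z \<and> t z) * pz z))"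
      by (subst sum.swap) (simp add: mult_ac)
    also have "\<dots> = (\<Sum>t\<in>T. theta M D t * (\<Sum>z\<in>PZ. of_bool (Q z \<and> t z) * pz z))"
      by (simp add: sum_distrib_left)
    finally show ?thesis .
  qed
  have numY: "(\<integral>\<omega>. indicator {\<omega>\<in>space M. Q (Z \<omega>)} \<omega> * Yobs D Z Y0 Y1 \<omega> \<partial>M)
      = prob {\<omega>\<in>space M. Q (Z \<omega>)} * expectation Y0
        + (\<Sum>t\<in>T. \<Delta> t * (\<Sum>z\<in>PZ. of_bool (Q z \<and> t z) * pz z))" for Q
  proof -
    have i0: "integrable M (\<lambda>\<omega>. indicator {\<omega>\<in>space M. Q (Z \<omega>)} \<omega> * Y0 \<omega>)"
      using integrable_mult_indicator[OF evQ Y0_int] by simp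
    have "(\<integral>\<omega>. indicator {\<omega>\<in>space M. Q (Z \<omega>)} \<omega> * Yobs D Z Y0 Y1 \<omega> \<partial>M)
        = (\<integral>\<omega>. indicator {\<omega>\<in>space M. Q (Z \<omega>)} \<omega> * Y0 \<omega>
        + (\<Sum>z\<in>PZ. \<Sum>t\<in>T. of_bool (Q z \<and> t z) * (indicator (E z t) \<omega> * (Y1 \<omega> - Y0 \<omega>))) \<partial>M)"
      by (intro Bochner_Integration.integral_cong refl) (simp add: YobsS)
    also have "\<dots> = (\<integral>\<omega>. indicator {\<omega>\<in>space M. Q (Z \<omega>)} \<omega> * Y0 \<omega> \<partial>M)
        + (\<Sum>z\<in>PZ. \<Sum>t\<in>T. (\<integral>\<omega>. of_bool (Q z \<and> t z) * (indicator (E z t) \<omega> * (Y1 \<omega> - Y0 \<omega>)) \<partial>M))"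
    proof -
      have "(\<integral>\<omega>. (\<Sum>z\<in>PZ. \<Sum>t\<in>T. of_bool (Q z \<and> t z) * (indicator (E z t) \<omega> * (Y1 \<omega> - Y0 \<omega>))) \<partial>M)
         = (\<Sum>z\<in>PZ. (\<integral>\<omega>. (\<Sum>t\<in>T. of_bool (Q z \<and> t z) * (indicator (E z t) \<omega> * (Y1 \<omega> - Y0 \<omega>))) \<partial>M))"
        by (rule Bochner_Integration.integral_sum) (intro Bochner_Integration.integrable_sum iEY)
      also have "\<dots> = (\<Sum>z\<in>PZ. \<Sum>t\<in>T. (\<integral>\<omega>. of_bool (Q z \<and> t z) * (indicator (E z t) \<omega> * (Y1 \<omega> - Y0 \<omega>)) \<partial>M))"
        by (intro sum.cong refl Bochner_Integration.integral_sum iEY)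
      finally have s: "(\<integral>\<omega>. (\<Sum>z\<in>PZ. \<Sum>t\<in>T. of_bool (Q z \<and> t z) * (indicator (E z t) \<omega> * (Y1 \<omega> - Y0 \<omega>))) \<partial>M)
         = (\<Sum>z\<in>PZ. \<Sum>t\<in>T. (\<integral>\<omega>. of_bool (Q z \<and> t z) * (indicator (E z t) \<omega> * (Y1 \<omega> - Y0 \<omega>)) \<partial>M))" .
      have i1: "integrable M (\<lambda>\<omega>. (\<Sum>z\<in>PZ. \<Sum>t\<in>T. of_bool (Q z \<and> t z) * (indicator (E z t) \<omega> * (Y1 \<omega> - Y0 \<omega>))))"
        by (intro Bochner_Integration.integrable_sum iEY)
      show ?thesis by (subst Bochner_Integration.integral_add[OF i0 i1]) (simp only: s)
    qed
    also have "\<dots> = prob {\<omega>\<in>space M. Q (Z \<omega>)} * expectation Y0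
        + (\<Sum>z\<in>PZ. \<Sum>t\<in>T. of_bool (Q z \<and> t z) * (pz z * \<Delta> t))"
      by (simp add: I1 I2)
    also have "(\<Sum>z\<in>PZ. \<Sum>t\<in>T. of_bool (Q z \<and> t z) * (pz z * \<Delta> t))
        = (\<Sum>t\<in>T. \<Sum>z\<in>PZ. \<Delta> t * (of_bool (Q z \<and> t z) * pz z))"
      by (subst sum.swap) (simp add: mult_ac)
    also have "\<dots> = (\<Sum>t\<in>T. \<Delta> t * (\<Sum>z\<in>PZ. of_bool (Q z \<and> t z) * pz z))"
      by (simp add: sum_distrib_left)
    finally show ?thesis .
  qed
  define P1 where "P1 = prob {\<omega>\<in>space M. l \<in> Z \<omega>}"
  define P0 where "P0 = prob {\<omega>\<in>space M. l \<notin> Z \<omega>}"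
  have P1pos: "P1 > 0" using A3_p[OF l] unfolding pZ_def P1_def .
  have P0eq: "P0 = 1 - P1"
  proof -
    have "{\<omega>\<in>space M. l \<notin> Z \<omega>} = space M - {\<omega>\<in>space M. l \<in> Z \<omega>}" by auto
    then show ?thesis unfolding P0_def P1_def using prob_compl[OF evQ[of "\<lambda>z. l \<in> z"]] by simp
  qed
  have intZ: "(\<integral>\<omega>. of_bool (l \<in> Z \<omega>) \<partial>M) = P1"
  proof -
    have "(\<integral>\<omega>. of_bool (l \<in> Z \<omega>) \<partial>M) = (\<integral>\<omega>. indicator {\<omega>\<in>space M. l \<in> Z \<omega>} \<omega> \<partial>M)"
      by (intro Bochner_Integration.integral_cong) (auto simp: indicator_def)
    also have "\<dots> = prob ({\<omega>\<in>space M. l \<in> Z \<omega>} \<inter> space M)" by (rule Bochner_Integration.integral_indicator)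
    also have "{\<omega>\<in>space M. l \<in> Z \<omega>} \<inter> space M = {\<omega>\<in>space M. l \<in> Z \<omega>}" by auto
    finally show ?thesis unfolding P1_def .
  qed
  have cov: "covZ M Z l l > 0"
  proof -
    have "(\<Sum>j<L. \<Sum>k<L. (if j = l then 1 else 0) * covZ M Z j k * (if k = l then 1 else 0)) > (0::real)"
      using A3_cov l unfolding covZ_posdef_def by (intro A3_cov[unfolded covZ_posdef_def, rule_format]) auto
    also have "(\<Sum>j<L. \<Sum>k<L. (if j = l then 1 else 0) * covZ M Z j k * (if k = l then 1 else 0)) = covZ M Z l l"
    proof -
      have "(\<Sum>j<L. \<Sum>k<L. (if j = l then 1 else 0) * covZ M Z j k * (if k = l then 1 else 0))
          = (\<Sum>j<L. \<Sum>k<L. if j = l \<and> k = l then covZ M Z j k else 0)"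
        by (intro sum.cong refl) auto
      also have "\<dots> = covZ M Z l l" using l by (intro sum_sum_delta) auto
      finally show ?thesis .
    qed
    finally show ?thesis .
  qed
  have "(\<lambda>\<omega>. of_bool (l \<in> Z \<omega>) * of_bool (l \<in> Z \<omega>) :: real) = (\<lambda>\<omega>. of_bool (l \<in> Z \<omega>))"
    by (auto simp: fun_eq_iff)
  then have "covZ M Z l l = P1 - P1 * P1" unfolding covZ_def using intZ by simp
  with cov have "P1 * P1 < P1 * 1" by simp
  then have "P1 < 1" using P1pos by (simp only: mult_less_cancel_left_pos)
  with P0eq have P0pos: "P0 > 0" by simp
  define S1 where "S1 = (\<lambda>t. \<Sum>z\<in>PZ. of_bool (l \<in> z \<and> t z) * pz z)"
  define S0 where "S0 = (\<lambda>t. \<Sum>z\<in>PZ. of_bool (l \<notin> z \<and> t z) * pz z)"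
  define ph where "ph = (\<lambda>t. S1 t / P1 - S0 t / P0)"
  have pi_eq: "piZ M D Z l = (\<Sum>t\<in>T. theta M D t * ph t)"
  proof -
    have a: "cexp M (Dobs D Z) (\<lambda>\<omega>. l \<in> Z \<omega>) = (\<Sum>t\<in>T. theta M D t * S1 t) / P1"
      unfolding cexp_def P1_def S1_def using numD[of "\<lambda>z. l \<in> z"] by simp
    have b: "cexp M (Dobs D Z) (\<lambda>\<omega>. l \<notin> Z \<omega>) = (\<Sum>t\<in>T. theta M D t * S0 t) / P0"
      unfolding cexp_def P0_def S0_def using numD[of "\<lambda>z. l \<notin> z"] by simp
    show ?thesis unfolding piZ_def a b ph_def
      by (simp add: right_diff_distrib sum_subtractf sum_divide_distrib)
  qed
  have rho_eq: "rhoZ M D Z Y0 Y1 l = (\<Sum>t\<in>T. \<Delta> t * ph t)"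
  proof -
    have a: "cexp M (Yobs D Z Y0 Y1) (\<lambda>\<omega>. l \<in> Z \<omega>) = expectation Y0 + (\<Sum>t\<in>T. \<Delta> t * S1 t) / P1"
      unfolding cexp_def using numY[of "\<lambda>z. l \<in> z"] P1pos
      by (simp add: P1_def[symmetric] S1_def add_divide_distrib)
    have b: "cexp M (Yobs D Z Y0 Y1) (\<lambda>\<omega>. l \<notin> Z \<omega>) = expectation Y0 + (\<Sum>t\<in>T. \<Delta> t * S0 t) / P0"
      unfolding cexp_def using numY[of "\<lambda>z. l \<notin> z"] P0pos
      by (simp add: P0_def[symmetric] S0_def add_divide_distrib)
    show ?thesis unfolding rhoZ_def a b ph_def
      by (simp add: right_diff_distrib sum_subtractf sum_divide_distrib)
  qed
  define W where "W = Pow ({..<L} - {l})"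
  have W0: "W = {z\<in>PZ. l \<notin> z}" unfolding W_def PZ_def by auto
  have W1: "insert l ` W = {z\<in>PZ. l \<in> z}"
  proof
    show "insert l ` W \<subseteq> {z\<in>PZ. l \<in> z}" unfolding W_def PZ_def using l by auto
    show "{z\<in>PZ. l \<in> z} \<subseteq> insert l ` W"
    proof
      fix z assume "z \<in> {z\<in>PZ. l \<in> z}"
      then have "z = insert l (z - {l})" "z - {l} \<in> W" unfolding W_def PZ_def by auto
      then show "z \<in> insert l ` W" by blast
    qed
  qed
  have injW: "inj_on (insert l) W" unfolding W_def by (rule inj_onI) auto
  have fW: "finite W" unfolding W_def by simp
  have q1w: "q1 M Z l w = pz (insert l w) / P1" if "w \<in> W" for w
  proof -
    have "{\<omega>\<in>space M. Z \<omega> - {l} = w \<and> l \<in> Z \<omega>} = {\<omega>\<in>space M. Z \<omega> = insert l w}"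
      using that unfolding W_def by auto
    then show ?thesis unfolding q1_def cprob_def pz_def P1_def by simp
  qed
  have q0w: "q0 M Z l w = pz w / P0" if "w \<in> W" for w
  proof -
    have "{\<omega>\<in>space M. Z \<omega> - {l} = w \<and> l \<notin> Z \<omega>} = {\<omega>\<in>space M. Z \<omega> = w}"
      using that unfolding W_def by auto
    then show ?thesis unfolding q0_def cprob_def pz_def P0_def by simp
  qed
  have phi_eq: "phi L M Z t l = ph t" for t
  proof -
    have "phi L M Z t l = (\<Sum>w\<in>W. of_bool (t (insert l w)) * (pz (insert l w) / P1) - of_bool (t w) * (pz w / P0))"
      unfolding phi_def W_def[symmetric] by (intro sum.cong refl) (simp add: q1w q0w)
    also have "\<dots> = (\<Sum>w\<in>W. of_bool (t (insert l w)) * pz (insert l w)) / P1 - (\<Sum>w\<in>W. of_bool (t w) * pz w) / P0"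
      by (simp add: sum_subtractf sum_divide_distrib)
    also have "(\<Sum>w\<in>W. of_bool (t (insert l w)) * pz (insert l w)) = S1 t"
    proof -
      have "(\<Sum>w\<in>W. of_bool (t (insert l w)) * pz (insert l w)) = (\<Sum>z\<in>insert l ` W. of_bool (t z) * pz z)"
        by (simp add: sum.reindex[OF injW])
      also have "\<dots> = (\<Sum>z\<in>PZ. if l \<in> z then of_bool (t z) * pz z else 0)"
        unfolding W1 by (rule sum.inter_filter[OF fPZ])
      also have "\<dots> = S1 t" unfolding S1_def by (intro sum.cong refl) auto
      finally show ?thesis .
    qed
    also have "(\<Sum>w\<in>W. of_bool (t w) * pz w) = S0 t"
    proof -
      have "(\<Sum>w\<in>W. of_bool (t w) * pz w) = (\<Sum>z\<in>PZ. if l \<notin> z then of_bool (t z) * pz z else 0)"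
        unfolding W0 by (rule sum.inter_filter[OF fPZ])
      also have "\<dots> = S0 t" unfolding S0_def by (intro sum.cong refl) auto
      finally show ?thesis .
    qed
    finally show ?thesis unfolding ph_def .
  qed
  have pipos: "piZ M D Z l > 0" using A3_pi[OF l] .
  have sumLATE: "(\<Sum>t\<in>ctypes L. LATE M D Y0 Y1 t * alpha L M D Z t l) = (\<Sum>t\<in>T. \<Delta> t * ph t) / piZ M D Z l"
  proof -
    have "(\<Sum>t\<in>ctypes L. LATE M D Y0 Y1 t * alpha L M D Z t l)
        = (\<Sum>t\<in>T. (theta M D t * LATE M D Y0 Y1 t) * ph t / piZ M D Z l)"
      unfolding T_def alpha_def phi_eq by (intro sum.cong refl) (simp add: mult_ac)
    also have "\<dots> = (\<Sum>t\<in>T. \<Delta> t * ph t) / piZ M D Z l"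
      by (simp add: thetaLATE sum_divide_distrib)
    finally show ?thesis .
  qed
  have sumalpha: "(\<Sum>t\<in>ctypes L. alpha L M D Z t l) = 1"
  proof -
    have "(\<Sum>t\<in>ctypes L. alpha L M D Z t l) = (\<Sum>t\<in>T. theta M D t * ph t) / piZ M D Z l"
      unfolding T_def alpha_def phi_eq by (simp add: sum_divide_distrib)
    also have "\<dots> = 1" using pipos pi_eq by simp
    finally show ?thesis .
  qed
  show ?thesis
    using sumLATE sumalpha unfolding wald_def rho_eq by simp
qed

end
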